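(* Every cubic (3-regular) graph $G$ of order $6$ (namely the complete bipartite graph $K_{3,3}$ and the triangular prism $K_3\square K_2$) satisfies $\mathcal{C}_f(G)=6$.
   Context: All graphs are finite and simple; $G=(V,E)$, $N(v)$ is the open neighborhood of $v$. A dominating set is $D\subseteq V$ such that every vertex of $V\setminus D$ has a neighbor in $D$. For an integer $k\geq 1$, a $k$-fair dominating set is a dominating set $D$ such that $|N(v)\cap D|=k$ for every $v\in V\setminus D$. A fair dominating set is a $k$-fair dominating set for some integer $k\geq 1$. A fair coalition consists of two disjoint sets $A_1,A_2\subseteq V$, neither of which is a fair dominating set, such that $A_1\cup A_2$ is a fair dominating set. A fair coalition partition ($fc$-partition) of $G$ is a partition $\Upsilon=\{A_1,\dots,A_k\}$ of $V$ such that every $A_i$ is either a singleton fair dominating set of $G$, or is not a fair dominating set and forms a fair coalition with some other non-fair-dominating set $A_j\in\Upsilon$. The fair coalition number $\mathcal{C}_f(G)$ is the maximum number of parts of an $fc$-partition of $G$. *)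

theory Defs
  imports Main "HOL-Library.Disjoint_Sets"
begin

definition simple_graph :: "'a set \<Rightarrow> ('a \<Rightarrow> 'a \<Rightarrow> bool) \<Rightarrow> bool" where
  "simple_graph V E \<longleftrightarrow> finite V \<and> (\<forall>u v. E u v \<longrightarrow> u \<in> V \<and> v \<in> V)
     \<and> (\<forall>u v. E u v \<longrightarrow> E v u) \<and> (\<forall>v. \<not> E v v)"

definition nbhd :: "'a set \<Rightarrow> ('a \<Rightarrow> 'a \<Rightarrow> bool) \<Rightarrow> 'a \<Rightarrow> 'a set" where
  "nbhd V E v = {u \<in> V. E v u}"

definition dominating_set :: "'a set \<Rightarrow> ('a \<Rightarrow> 'a \<Rightarrow> bool) \<Rightarrow> 'a set \<Rightarrow> bool" where
  "dominating_set V E D \<longleftrightarrow> D \<subseteq> V \<and> (\<forall>v \<in> V - D. \<exists>u \<in> D. E v u)"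

definition k_fair_dominating :: "'a set \<Rightarrow> ('a \<Rightarrow> 'a \<Rightarrow> bool) \<Rightarrow> nat \<Rightarrow> 'a set \<Rightarrow> bool" where
  "k_fair_dominating V E k D \<longleftrightarrow> dominating_set V E D
     \<and> (\<forall>v \<in> V - D. card (nbhd V E v \<inter> D) = k)"

definition fair_dominating :: "'a set \<Rightarrow> ('a \<Rightarrow> 'a \<Rightarrow> bool) \<Rightarrow> 'a set \<Rightarrow> bool" where
  "fair_dominating V E D \<longleftrightarrow> (\<exists>k \<ge> 1. k_fair_dominating V E k D)"

definition fair_coalition :: "'a set \<Rightarrow> ('a \<Rightarrow> 'a \<Rightarrow> bool) \<Rightarrow> 'a set \<Rightarrow> 'a set \<Rightarrow> bool" where
  "fair_coalition V E A1 A2 \<longleftrightarrow> A1 \<subseteq> V \<and> A2 \<subseteq> V \<and> A1 \<inter> A2 = {}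
     \<and> \<not> fair_dominating V E A1 \<and> \<not> fair_dominating V E A2
     \<and> fair_dominating V E (A1 \<union> A2)"

definition fc_partition :: "'a set \<Rightarrow> ('a \<Rightarrow> 'a \<Rightarrow> bool) \<Rightarrow> 'a set set \<Rightarrow> bool" where
  "fc_partition V E P \<longleftrightarrow> partition_on V P \<and>
     (\<forall>A \<in> P. (card A = 1 \<and> fair_dominating V E A)
        \<or> (\<not> fair_dominating V E A \<and> (\<exists>B \<in> P. B \<noteq> A \<and> fair_coalition V E A B)))"

definition fair_coalition_number :: "'a set \<Rightarrow> ('a \<Rightarrow> 'a \<Rightarrow> bool) \<Rightarrow> nat" where
  "fair_coalition_number V E = Max {card P | P. fc_partition V E P}"

end

theory Submission
  imports Defs
begin

lemma part_card_le:
  assumes "finite V" "partition_on V P"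
  shows "card P \<le> card V"
proof -
  have fP: "finite P" using finite_elements assms by blast
  have fp: "\<And>p. p \<in> P \<Longrightarrow> finite p"
    using assms partition_onD1 finite_subset by (metis Union_upper)
  have ne: "\<And>p. p \<in> P \<Longrightarrow> card p \<ge> 1"
    using fp assms(2) partition_onD3 by (metis One_nat_def Suc_leI card_gt_0_iff)
  have "card P = (\<Sum>p\<in>P. 1)" by simp
  also have "\<dots> \<le> (\<Sum>p\<in>P. card p)" using ne by (meson sum_mono)
  also have "\<dots> = card V" using product_partition[OF assms(2) fp] by simp
  finally show ?thesis .
qed

lemma key:
  assumes g: "simple_graph V E" and c6: "card V = 6"
    and deg: "\<forall>v \<in> V. card (nbhd V E v) = 3" and vV: "v \<in> V"
  shows "\<exists>u\<in>V. E v u \<and> (\<forall>w. E u w \<longrightarrow> \<not> E v w)"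
proof (rule ccontr)
  assume "\<not> ?thesis"
  hence H: "\<And>u. E v u \<Longrightarrow> \<exists>w. E u w \<and> E v w"
    using g unfolding simple_graph_def by blast
  have fV: "finite V" using g unfolding simple_graph_def by blast
  have sym: "\<And>p q. E p q \<Longrightarrow> E q p" and irr: "\<And>p. \<not> E p p"
    and inV: "\<And>p q. E p q \<Longrightarrow> p \<in> V \<and> q \<in> V"
    using g unfolding simple_graph_def by blast+
  obtain a b c where abc: "nbhd V E v = {a,b,c}" "a \<noteq> b" "b \<noteq> c" "a \<noteq> c"
    using deg vV card_3_iff by metis
  have Nv: "\<And>p. E v p \<longleftrightarrow> p = a \<or> p = b \<or> p = c"
    using abc(1) inV unfolding nbhd_def by blast
  have abcV: "{v,a,b,c} \<subseteq> V" using Nv inV vV by blast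
  have v_ne: "v \<noteq> a" "v \<noteq> b" "v \<noteq> c" using Nv irr by blast+
  have "card {v,a,b,c} = 4" using abc v_ne by simp
  hence "card (V - {v,a,b,c}) = 2" using c6 abcV fV by (simp add: card_Diff_subset)
  then obtain x y where xy: "V - {v,a,b,c} = {x,y}" "x \<noteq> y" using card_2_iff by metis
  have nx: "\<And>p. E x p \<Longrightarrow> p \<in> {a,b,c,y}"
  proof -
    fix p assume "E x p"
    then have "p \<in> V" "p \<noteq> x" "p \<noteq> v" using inV irr sym Nv xy(1) by blast+
    then show "p \<in> {a,b,c,y}" using xy(1) by blast
  qed
  have ny: "\<And>p. E y p \<Longrightarrow> p \<in> {a,b,c,x}"
  proof -
    fix p assume "E y p"
    then have "p \<in> V" "p \<noteq> y" "p \<noteq> v" using inV irr sym Nv xy(1) by blast+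
    then show "p \<in> {a,b,c,x}" using xy(1) by blast
  qed
  have xV: "x \<in> V" "y \<in> V" using xy by blast+
  have cx: "card (nbhd V E x) = 3" "card (nbhd V E y) = 3" using deg xV by auto
  have sx: "nbhd V E x \<subseteq> insert y (nbhd V E x \<inter> {a,b,c})" using nx unfolding nbhd_def by auto
  have sy: "nbhd V E y \<subseteq> insert x (nbhd V E y \<inter> {a,b,c})" using ny unfolding nbhd_def by auto
  have "3 \<le> card (insert y (nbhd V E x \<inter> {a,b,c}))"
    using cx sx by (metis card_mono finite.emptyI finite.insertI finite_Int)
  moreover have "card (insert y (nbhd V E x \<inter> {a,b,c})) \<le> Suc (card (nbhd V E x \<inter> {a,b,c}))"
    by (simp add: card_insert_if)
  ultimately have kx: "2 \<le> card (nbhd V E x \<inter> {a,b,c})" by linarith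
  have "3 \<le> card (insert x (nbhd V E y \<inter> {a,b,c}))"
    using cx sy by (metis card_mono finite.emptyI finite.insertI finite_Int)
  moreover have "card (insert x (nbhd V E y \<inter> {a,b,c})) \<le> Suc (card (nbhd V E y \<inter> {a,b,c}))"
    by (simp add: card_insert_if)
  ultimately have ky: "2 \<le> card (nbhd V E y \<inter> {a,b,c})" by linarith
  have "(nbhd V E x \<inter> {a,b,c}) \<inter> (nbhd V E y \<inter> {a,b,c}) \<noteq> {}"
  proof
    assume dj: "(nbhd V E x \<inter> {a,b,c}) \<inter> (nbhd V E y \<inter> {a,b,c}) = {}"
    have "card ((nbhd V E x \<inter> {a,b,c}) \<union> (nbhd V E y \<inter> {a,b,c}))
          = card (nbhd V E x \<inter> {a,b,c}) + card (nbhd V E y \<inter> {a,b,c})"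
      using dj by (simp add: card_Un_disjoint)
    moreover have "card ((nbhd V E x \<inter> {a,b,c}) \<union> (nbhd V E y \<inter> {a,b,c})) \<le> card {a,b,c}"
      by (rule card_mono) auto
    moreover have "card {a,b,c} = 3" using abc by simp
    ultimately show False using kx ky by linarith
  qed
  then obtain t where t: "t \<in> {a,b,c}" "E x t" "E y t" unfolding nbhd_def by blast
  have "E v t" using Nv t(1) by simp
  then obtain w where w: "E t w" "E v w" using H by blast
  have d: "w \<in> {a,b,c}" using w(2) Nv by simp
  have xyn: "x \<notin> {v,a,b,c}" "y \<notin> {v,a,b,c}" using xy(1) by (metis DiffD2 insertCI)+
  have "{v,x,y,w} \<subseteq> nbhd V E t"
    using t w sym inV Nv unfolding nbhd_def by blast
  moreover have "card {v,x,y,w} = 4" using xyn d xy(2) v_ne by auto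
  moreover have "card (nbhd V E t) = 3" using deg t abcV by auto
  moreover have "finite (nbhd V E t)" using fV unfolding nbhd_def by simp
  ultimately show False using card_mono[of "nbhd V E t" "{v,x,y,w}"] by linarith
qed

theorem theorem3p1:
  fixes V :: "'a set" and E :: "'a \<Rightarrow> 'a \<Rightarrow> bool"
  assumes "simple_graph V E"
    and "card V = 6"
    and "\<forall>v \<in> V. card (nbhd V E v) = 3"
  shows "fair_coalition_number V E = 6"
proof -
  note g = assms(1) and c6 = assms(2) and deg = assms(3)
  have fV: "finite V" using g unfolding simple_graph_def by blast
  have sym: "\<And>p q. E p q \<Longrightarrow> E q p" and irr: "\<And>p. \<not> E p p"
    and inV: "\<And>p q. E p q \<Longrightarrow> p \<in> V \<and> q \<in> V"
    using g unfolding simple_graph_def by blast+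
  have fN: "\<And>w. finite (nbhd V E w)" using fV unfolding nbhd_def by simp
  have nf: "\<not> fair_dominating V E {v}" if vV: "v \<in> V" for v
  proof
    assume "fair_dominating V E {v}"
    then have "dominating_set V E {v}" unfolding fair_dominating_def k_fair_dominating_def by blast
    then have "V - {v} \<subseteq> nbhd V E v" unfolding dominating_set_def nbhd_def using sym by blast
    then have "card (V - {v}) \<le> card (nbhd V E v)" using fN card_mono by blast
    moreover have "card (V - {v}) = 5" using c6 vV fV by simp
    ultimately show False using deg vV by simp
  qed
  have fd: "fair_dominating V E {v,u}"
    if vV: "v \<in> V" and uV: "u \<in> V" and vu: "E v u" and nc: "\<forall>w. E u w \<longrightarrow> \<not> E v w" for v u
  proof -
    define A where "A = nbhd V E v - {u}"
    define B where "B = nbhd V E u - {v}"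
    have uv: "u \<noteq> v" using vu irr by blast
    have cA: "card A = 2" unfolding A_def using deg vV vu uV fN by (simp add: nbhd_def)
    have cB: "card B = 2" unfolding B_def using deg vV vu uV fN sym by (simp add: nbhd_def)
    have dj: "A \<inter> B = {}" unfolding A_def B_def nbhd_def using nc by blast
    have sub: "A \<union> B \<subseteq> V - {v,u}" unfolding A_def B_def nbhd_def using irr by blast
    have c4: "card (V - {v,u}) = 4" using c6 vV uV fV uv by (simp add: card_Diff_subset)
    have fAB: "finite A" "finite B" unfolding A_def B_def using fN by auto
    have "card (A \<union> B) = 4" using cA cB dj fAB by (simp add: card_Un_disjoint)
    then have eq: "A \<union> B = V - {v,u}"
      using sub c4 card_subset_eq fV by (metis finite_Diff)
    have "k_fair_dominating V E 1 {v,u}"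
      unfolding k_fair_dominating_def dominating_set_def
    proof (intro conjI ballI)
      show "{v,u} \<subseteq> V" using vV uV by blast
    next
      fix w assume "w \<in> V - {v,u}"
      then have "w \<in> A \<union> B" using eq by blast
      then show "\<exists>x\<in>{v,u}. E w x" unfolding A_def B_def nbhd_def using sym by blast
    next
      fix w assume "w \<in> V - {v,u}"
      then have w: "w \<in> A \<union> B" "w \<in> V" using eq by blast+
      show "card (nbhd V E w \<inter> {v,u}) = 1"
      proof (cases "w \<in> A")
        case True
        then have "E w v" "\<not> E w u" unfolding A_def nbhd_def using sym nc by blast+
        then have "nbhd V E w \<inter> {v,u} = {v}" unfolding nbhd_def using vV by blast
        then show ?thesis by simp
      next
        case False
        then have "w \<in> B" using w by blast
        then have "E w u" "\<not> E w v" unfolding B_def nbhd_def using sym nc by blast+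
        then have "nbhd V E w \<inter> {v,u} = {u}" unfolding nbhd_def using uV by blast
        then show ?thesis by simp
      qed
    qed
    then show ?thesis unfolding fair_dominating_def by blast
  qed
  define P where "P = (\<lambda>x. {x}) ` V"
  have fcP: "fc_partition V E P"
    unfolding fc_partition_def
  proof (intro conjI ballI)
    show "partition_on V P" unfolding P_def by (rule partition_on_singletons)
  next
    fix A assume "A \<in> P"
    then obtain v where v: "v \<in> V" "A = {v}" unfolding P_def by blast
    obtain u where u: "u \<in> V" "E v u" "\<forall>w. E u w \<longrightarrow> \<not> E v w"
      using key[OF g c6 deg v(1)] by blast
    have uv: "u \<noteq> v" using u irr by blast
    have "fair_coalition V E {v} {u}"
      unfolding fair_coalition_def using v u uv nf fd[OF v(1) u(1) u(2) u(3)]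
      by (simp add: insert_commute)
    moreover have "{u} \<in> P" "{u} \<noteq> A" using u uv v unfolding P_def by auto
    ultimately show "(card A = 1 \<and> fair_dominating V E A) \<or>
         (\<not> fair_dominating V E A \<and> (\<exists>B\<in>P. B \<noteq> A \<and> fair_coalition V E A B))"
      using v nf by blast
  qed
  have cP: "card P = 6" unfolding P_def using c6 by (simp add: card_image)
  let ?S = "{card P | P. fc_partition V E P}"
  have le: "y \<le> 6" if "y \<in> ?S" for y
    using that part_card_le[OF fV] c6 unfolding fc_partition_def by auto
  have fin: "finite ?S"
    by (rule finite_subset[of _ "{..6}"]) (use le in auto)
  have "Max ?S = 6"
    by (rule Max_eqI[OF fin]) (use le fcP cP in auto)
  then show ?thesis unfolding fair_coalition_number_def by simp
qed

end
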